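(* Let $n\ge 2$. The function $\psi$ is positive on $\mathbb{C}\setminus\mathbb{R}$ and for all $z\in\mathbb{C}\setminus\mathbb{R}$ satisfies $$\psi(-z)=\psi(\bar z)=\psi(z),\qquad \psi\!\left(\frac1z\right)=|z|^4\psi(z).$$
   Context: For $z\in\mathbb{C}\setminus\mathbb{R}$, let $D_z$ be the set of $(t_1,\dots,t_{n-1})\in\mathbb{R}^{n-1}$ with $\max_{1\le k\le n-1}|t_k|\le 1$, $\left|z\sum_{k=1}^{n-1}t_k\left(z^k-\frac{\Im z^{k+1}}{\Im z}\right)\right|\le 1$ and $\left|\frac{1}{\Im z}\sum_{k=1}^{n-1}t_k\Im z^{k+1}\right|\le 1$, and define $$\psi(z)=\frac{1}{|\Im z|}\int_{D_z}\left|\sum_{k=1}^{n-1}t_k\left((k+1)z^{k}-\frac{\Im z^{k+1}}{\Im z}\right)\right|^2dt_1\dots dt_{n-1}.$$ *)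

theory Defs
  imports "HOL-Analysis.Analysis"
begin

text \<open>Lebesgue measure on R^(n-1), realised as the product measure over the index
  set {1..n-1}; points are functions t :: nat => real (extensional outside {1..n-1}).\<close>
definition lebR :: "nat \<Rightarrow> (nat \<Rightarrow> real) measure" where
  "lebR n = PiM {1..n-1} (\<lambda>_. lborel)"

definition Dz :: "nat \<Rightarrow> complex \<Rightarrow> (nat \<Rightarrow> real) set" where
  "Dz n z = {t. (\<forall>k\<in>{1..n-1}. \<bar>t k\<bar> \<le> 1)
      \<and> cmod (z * (\<Sum>k=1..n-1. complex_of_real (t k) *
            (z ^ k - complex_of_real (Im (z ^ (k+1)) / Im z)))) \<le> 1
      \<and> \<bar>(1 / Im z) * (\<Sum>k=1..n-1. t k * Im (z ^ (k+1)))\<bar> \<le> 1}"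

definition psi :: "nat \<Rightarrow> complex \<Rightarrow> real" where
  "psi n z = (1 / \<bar>Im z\<bar>) *
     (LINT t : Dz n z | lebR n.
        (cmod (\<Sum>k=1..n-1. complex_of_real (t k) *
            (of_nat (k+1) * z ^ k - complex_of_real (Im (z ^ (k+1)) / Im z))))\<^sup>2)"

end

theory Submission
  imports Defs
begin



lemma affine_sub:
  fixes c a :: real
  assumes [measurable]: "g \<in> borel_measurable borel" and c: "c \<noteq> 0"
  shows "(\<integral>\<^sup>+x. g (a + c * x) \<partial>lborel) = ennreal (1/\<bar>c\<bar>) * (\<integral>\<^sup>+x. g x \<partial>lborel)"
proof -
  have "(\<integral>\<^sup>+x. g x \<partial>lborel) = ennreal \<bar>c\<bar> * (\<integral>\<^sup>+x. g (a + c * x) \<partial>lborel)"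
    using nn_integral_real_affine[OF assms(1) c, of a] by simp
  then have "ennreal (1/\<bar>c\<bar>) * (\<integral>\<^sup>+x. g x \<partial>lborel) = ennreal (1/\<bar>c\<bar>) * ennreal \<bar>c\<bar> * (\<integral>\<^sup>+x. g (a + c * x) \<partial>lborel)"
    by (simp add: mult.assoc)
  also have "ennreal (1/\<bar>c\<bar>) * ennreal \<bar>c\<bar> = 1"
    using c by (simp flip: ennreal_mult)
  finally show ?thesis by simp
qed

lemma nn2d_aux:
  fixes p q r s e f :: real
  assumes s: "s \<noteq> 0" and det: "p * s - q*r \<noteq> 0"
    and [measurable]: "case_prod h \<in> borel_measurable (lborel \<Otimes>\<^sub>M lborel)"
  shows "(\<integral>\<^sup>+x. \<integral>\<^sup>+y. h (p*x+q*y+e) (r*x+s*y+f) \<partial>lborel \<partial>lborel)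
       = ennreal (1/\<bar>p * s - q*r\<bar>) * (\<integral>\<^sup>+x. \<integral>\<^sup>+y. h x y \<partial>lborel \<partial>lborel)"
proof -
  define d where "d = p - q*r/s"
  have d0: "d \<noteq> 0" using s det by (auto simp: d_def field_simps)
  have hm: "h x \<in> borel_measurable borel" for x by measurable
  have hm2: "(\<lambda>x. h x y) \<in> borel_measurable borel" for y by measurable
  have "(\<integral>\<^sup>+x. \<integral>\<^sup>+y. h (p*x+q*y+e) (r*x+s*y+f) \<partial>lborel \<partial>lborel)
      = (\<integral>\<^sup>+x. ennreal (1/\<bar>s\<bar>) * \<integral>\<^sup>+y. h (p*x + q*(y - r*x - f)/s + e) y \<partial>lborel \<partial>lborel)"
  proof (rule nn_integral_cong)
    fix x
    have "(\<integral>\<^sup>+y. h (p*x+q*y+e) (r*x+s*y+f) \<partial>lborel) = (\<integral>\<^sup>+y. (\<lambda>y. h (p*x + q*(y - r*x - f)/s + e) y) ((r*x+f) + s*y) \<partial>lborel)"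
      using s by (intro nn_integral_cong) (simp add: field_simps)
    also have "\<dots> = ennreal (1/\<bar>s\<bar>) * \<integral>\<^sup>+y. h (p*x + q*(y - r*x - f)/s + e) y \<partial>lborel"
      by (rule affine_sub[OF _ s]) measurable
    finally show "(\<integral>\<^sup>+y. h (p*x+q*y+e) (r*x+s*y+f) \<partial>lborel) = \<dots>" .
  qed
  also have "\<dots> = ennreal (1/\<bar>s\<bar>) * (\<integral>\<^sup>+x. \<integral>\<^sup>+y. h (p*x + q*(y - r*x - f)/s + e) y \<partial>lborel \<partial>lborel)"
    by (rule nn_integral_cmult) measurable
  also have "(\<integral>\<^sup>+x. \<integral>\<^sup>+y. h (p*x + q*(y - r*x - f)/s + e) y \<partial>lborel \<partial>lborel)
      = (\<integral>\<^sup>+y. \<integral>\<^sup>+x. h (p*x + q*(y - r*x - f)/s + e) y \<partial>lborel \<partial>lborel)"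
    by (rule lborel_pair.Fubini'[symmetric]) measurable
  also have "\<dots> = (\<integral>\<^sup>+y. ennreal (1/\<bar>d\<bar>) * \<integral>\<^sup>+x. h x y \<partial>lborel \<partial>lborel)"
  proof (rule nn_integral_cong)
    fix y
    have "(\<integral>\<^sup>+x. h (p*x + q*(y - r*x - f)/s + e) y \<partial>lborel) = (\<integral>\<^sup>+x. (\<lambda>x. h x y) ((q*(y-f)/s + e) + d*x) \<partial>lborel)"
    proof -
      have "\<And>x. p*x + q*(y - r*x - f)/s + e = (q*(y-f)/s + e) + d*x"
        using s by (simp add: d_def field_simps)
      then show ?thesis by (simp add: ac_simps)
    qed
    also have "\<dots> = ennreal (1/\<bar>d\<bar>) * \<integral>\<^sup>+x. h x y \<partial>lborel"
      by (rule affine_sub[OF hm2 d0])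
    finally show "(\<integral>\<^sup>+x. h (p*x + q*(y - r*x - f)/s + e) y \<partial>lborel) = \<dots>" .
  qed
  also have "\<dots> = ennreal (1/\<bar>d\<bar>) * (\<integral>\<^sup>+y. \<integral>\<^sup>+x. h x y \<partial>lborel \<partial>lborel)"
    by (rule nn_integral_cmult) measurable
  also have "(\<integral>\<^sup>+y. \<integral>\<^sup>+x. h x y \<partial>lborel \<partial>lborel) = (\<integral>\<^sup>+x. \<integral>\<^sup>+y. h x y \<partial>lborel \<partial>lborel)"
    by (rule lborel_pair.Fubini') measurable
  also have "ennreal (1/\<bar>s\<bar>) * (ennreal (1/\<bar>d\<bar>) * X) = ennreal (1/\<bar>p * s - q*r\<bar>) * X" for X
  proof -
    have "\<bar>s\<bar> * \<bar>d\<bar> = \<bar>p * s - q*r\<bar>" using s by (simp add: d_def abs_mult[symmetric] field_simps)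
    then have "(1/\<bar>s\<bar>) * (1/\<bar>d\<bar>) = 1/\<bar>p * s - q*r\<bar>" by (simp add: field_simps)
    then show ?thesis by (simp add: mult.assoc[symmetric] ennreal_mult[symmetric])
  qed
  finally show ?thesis .
qed

lemma nn2d:
  fixes p q r s e f :: real
  assumes det: "p * s - q*r \<noteq> 0"
    and [measurable]: "case_prod h \<in> borel_measurable (lborel \<Otimes>\<^sub>M lborel)"
  shows "(\<integral>\<^sup>+x. \<integral>\<^sup>+y. h (p*x+q*y+e) (r*x+s*y+f) \<partial>lborel \<partial>lborel)
       = ennreal (1/\<bar>p * s - q*r\<bar>) * (\<integral>\<^sup>+x. \<integral>\<^sup>+y. h x y \<partial>lborel \<partial>lborel)"
proof (cases "s = 0")
  case False then show ?thesis using nn2d_aux[OF False det] by simp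
next
  case True
  then have r: "r \<noteq> 0" using det by auto
  have det2: "q * r - p * s \<noteq> 0" using det by auto
  have "(\<integral>\<^sup>+x. \<integral>\<^sup>+y. h (p*x+q*y+e) (r*x+s*y+f) \<partial>lborel \<partial>lborel)
      = (\<integral>\<^sup>+y. \<integral>\<^sup>+x. h (p*x+q*y+e) (r*x+s*y+f) \<partial>lborel \<partial>lborel)"
    by (rule lborel_pair.Fubini'[symmetric]) measurable
  also have "\<dots> = (\<integral>\<^sup>+y. \<integral>\<^sup>+x. h (q*y+p*x+e) (s*y+r*x+f) \<partial>lborel \<partial>lborel)"
    by (simp add: ac_simps)
  also have "\<dots> = ennreal (1/\<bar>q * r - p * s\<bar>) * (\<integral>\<^sup>+x. \<integral>\<^sup>+y. h x y \<partial>lborel \<partial>lborel)"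
    by (rule nn2d_aux[OF r det2]) measurable
  also have "\<bar>q * r - p * s\<bar> = \<bar>p * s - q*r\<bar>" by simp
  finally show ?thesis .
qed

interpretation lbp: product_sigma_finite "\<lambda>_::nat. lborel::real measure"
  by unfold_locales

lemma expand2:
  fixes J :: "nat set" and g :: "(nat \<Rightarrow> real) \<Rightarrow> ennreal"
  assumes J: "finite J" "j1 \<noteq> j2" "j1 \<notin> J" "j2 \<notin> J"
  and [measurable]: "g \<in> borel_measurable (PiM (insert j1 (insert j2 J)) (\<lambda>_. lborel))"
  shows "(\<integral>\<^sup>+t. g t \<partial>PiM (insert j1 (insert j2 J)) (\<lambda>_. lborel))
    = (\<integral>\<^sup>+x. \<integral>\<^sup>+y2. \<integral>\<^sup>+y1. g (x(j2:=y2, j1:=y1)) \<partial>lborel \<partial>lborel \<partial>PiM J (\<lambda>_. lborel))"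
proof -
  have "(\<integral>\<^sup>+t. g t \<partial>PiM (insert j1 (insert j2 J)) (\<lambda>_. lborel))
     = (\<integral>\<^sup>+x. \<integral>\<^sup>+y1. g (x(j1:=y1)) \<partial>lborel \<partial>PiM (insert j2 J) (\<lambda>_. lborel))"
    using J by (subst lbp.product_nn_integral_insert) auto
  also have "\<dots> = (\<integral>\<^sup>+x. \<integral>\<^sup>+y2. \<integral>\<^sup>+y1. g (x(j2:=y2, j1:=y1)) \<partial>lborel \<partial>lborel \<partial>PiM J (\<lambda>_. lborel))"
    using J by (subst lbp.product_nn_integral_insert) (auto, measurable)
  finally show ?thesis .
qed

lemma pim2:
  fixes I :: "nat set" and h :: "(nat \<Rightarrow> real) \<Rightarrow> ennreal" and a0 b0 :: "(nat \<Rightarrow> real) \<Rightarrow> real" and p q r s :: real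
  assumes I: "finite I" "j1 \<in> I" "j2 \<in> I" "j1 \<noteq> j2" and det: "p * s - q * r \<noteq> 0"
  and hm: "h \<in> borel_measurable (PiM I (\<lambda>_. lborel))"
  and am: "a0 \<in> borel_measurable (PiM I (\<lambda>_. lborel))"
  and bm: "b0 \<in> borel_measurable (PiM I (\<lambda>_. lborel))"
  and ai: "\<And>t u v. a0 (t(j1:=u, j2:=v)) = a0 t" and bi: "\<And>t u v. b0 (t(j1:=u, j2:=v)) = b0 t"
  shows "(\<integral>\<^sup>+t. h (t(j1 := p * t j1 + q * t j2 + a0 t, j2 := r * t j1 + s * t j2 + b0 t)) \<partial>PiM I (\<lambda>_. lborel))
     = ennreal (1/\<bar>p * s - q * r\<bar>) * (\<integral>\<^sup>+t. h t \<partial>PiM I (\<lambda>_. lborel))"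
proof -
  define J where "J = I - {j1, j2}"
  have IJ: "I = insert j1 (insert j2 J)" and J: "finite J" "j1 \<notin> J" "j2 \<notin> J"
    using I by (auto simp: J_def)
  note [measurable] = hm[unfolded IJ] am[unfolded IJ] bm[unfolded IJ]
  define S where "S t = t(j1 := p * t j1 + q * t j2 + a0 t, j2 := r * t j1 + s * t j2 + b0 t)" for t
  have S1: "(\<lambda>t. t(j1 := p * t j1 + q * t j2 + a0 t)) \<in> measurable (PiM (insert j1 (insert j2 J)) (\<lambda>_. lborel)) (PiM (insert j1 (insert j2 J)) (\<lambda>_. lborel))"
    by (rule measurable_fun_upd[where J="insert j1 (insert j2 J)"]) (auto, measurable)
  have Sm[measurable]: "S \<in> measurable (PiM (insert j1 (insert j2 J)) (\<lambda>_. lborel)) (PiM (insert j1 (insert j2 J)) (\<lambda>_. lborel))"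
    unfolding S_def
    by (rule measurable_fun_upd[where J="insert j1 (insert j2 J)", OF _ S1]) (auto, measurable)
  have "(\<integral>\<^sup>+t. h (S t) \<partial>PiM I (\<lambda>_. lborel))
     = (\<integral>\<^sup>+x. \<integral>\<^sup>+y2. \<integral>\<^sup>+y1. h (S (x(j2:=y2, j1:=y1))) \<partial>lborel \<partial>lborel \<partial>PiM J (\<lambda>_. lborel))"
    unfolding IJ by (rule expand2) (use I J IJ in auto, measurable)
  also have "\<dots> = (\<integral>\<^sup>+x. ennreal (1/\<bar>p * s - q * r\<bar>) * \<integral>\<^sup>+y2. \<integral>\<^sup>+y1. h (x(j2:=y2, j1:=y1)) \<partial>lborel \<partial>lborel \<partial>PiM J (\<lambda>_. lborel))"
  proof (rule nn_integral_cong)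
    fix x :: "nat \<Rightarrow> real" assume x: "x \<in> space (PiM J (\<lambda>_. lborel))"
    define hx where "hx a b = h (x(j1:=b, j2:=a))" for a b
    have xm: "(\<lambda>w::real\<times>real. x) \<in> measurable (lborel \<Otimes>\<^sub>M lborel) (PiM J (\<lambda>_. lborel))"
      using x by (rule measurable_const)
    have m1: "(\<lambda>w::real\<times>real. x(j1 := snd w)) \<in> measurable (lborel \<Otimes>\<^sub>M lborel) (PiM (insert j1 J) (\<lambda>_. lborel))"
      by (rule measurable_fun_upd[OF _ xm]) auto
    have m2: "(\<lambda>w::real\<times>real. x(j1 := snd w, j2 := fst w)) \<in> measurable (lborel \<Otimes>\<^sub>M lborel) (PiM (insert j1 (insert j2 J)) (\<lambda>_. lborel))"
      by (rule measurable_fun_upd[OF _ m1]) auto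
    have hxm: "case_prod hx \<in> borel_measurable (lborel \<Otimes>\<^sub>M lborel)"
    proof -
      have "case_prod hx = h \<circ> (\<lambda>w::real\<times>real. x(j1 := snd w, j2 := fst w))"
        by (auto simp: hx_def fun_eq_iff)
      then show ?thesis using m2 by (simp add: measurable_comp[OF m2 hm[unfolded IJ]])
    qed
    have eq1: "S (x(j2:=y2, j1:=y1)) = x(j1 := p * y1 + q * y2 + a0 x, j2 := r * y1 + s * y2 + b0 x)" for y1 y2
    proof -
      have tw: "x(j2:=y2, j1:=y1) = x(j1:=y1, j2:=y2)" using I by (simp add: fun_upd_twist)
      show ?thesis unfolding S_def tw using I by (simp add: ai bi fun_upd_twist)
    qed
    have "(\<integral>\<^sup>+y2. \<integral>\<^sup>+y1. h (S (x(j2:=y2, j1:=y1))) \<partial>lborel \<partial>lborel)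
       = (\<integral>\<^sup>+y2. \<integral>\<^sup>+y1. hx (s*y2 + r*y1 + b0 x) (q*y2 + p*y1 + a0 x) \<partial>lborel \<partial>lborel)"
      unfolding eq1 hx_def using I by (simp add: ac_simps fun_upd_twist)
    also have "\<dots> = ennreal (1/\<bar>s * p - r*q\<bar>) * (\<integral>\<^sup>+y2. \<integral>\<^sup>+y1. hx y2 y1 \<partial>lborel \<partial>lborel)"
      by (rule nn2d[OF _ hxm]) (use det in \<open>simp add: ac_simps\<close>)
    also have "(\<integral>\<^sup>+y2. \<integral>\<^sup>+y1. hx y2 y1 \<partial>lborel \<partial>lborel) = (\<integral>\<^sup>+y2. \<integral>\<^sup>+y1. h (x(j2:=y2, j1:=y1)) \<partial>lborel \<partial>lborel)"
      unfolding hx_def using I by (simp add: fun_upd_twist)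
    also have "\<bar>s * p - r*q\<bar> = \<bar>p * s - q * r\<bar>" by (simp add: ac_simps)
    finally show "(\<integral>\<^sup>+y2. \<integral>\<^sup>+y1. h (S (x(j2:=y2, j1:=y1))) \<partial>lborel \<partial>lborel) = ennreal (1/\<bar>p * s - q * r\<bar>) * \<integral>\<^sup>+y2. \<integral>\<^sup>+y1. h (x(j2:=y2, j1:=y1)) \<partial>lborel \<partial>lborel" .
  qed
  also have "\<dots> = ennreal (1/\<bar>p * s - q * r\<bar>) * (\<integral>\<^sup>+x. \<integral>\<^sup>+y2. \<integral>\<^sup>+y1. h (x(j2:=y2, j1:=y1)) \<partial>lborel \<partial>lborel \<partial>PiM J (\<lambda>_. lborel))"
    by (rule nn_integral_cmult) (use J in measurable)
  also have "(\<integral>\<^sup>+x. \<integral>\<^sup>+y2. \<integral>\<^sup>+y1. h (x(j2:=y2, j1:=y1)) \<partial>lborel \<partial>lborel \<partial>PiM J (\<lambda>_. lborel)) = (\<integral>\<^sup>+t. h t \<partial>PiM I (\<lambda>_. lborel))"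
    unfolding IJ by (rule expand2[symmetric]) (use I J IJ in auto)
  finally show ?thesis unfolding S_def .
qed

lemma lborel_refl:
  fixes c :: real
  assumes c: "c = 1 \<or> c = -1" and B: "B \<in> sets borel"
  shows "emeasure lborel ((\<lambda>x. c * x) -` B) = emeasure lborel B"
  using c
proof
  assume "c = -1"
  then have "(\<lambda>x. c * x) -` B = uminus -` B \<inter> space lborel" by auto
  also have "emeasure lborel \<dots> = emeasure (distr lborel borel uminus) B"
    using B by (simp add: emeasure_distr)
  finally show ?thesis by (simp add: lborel_distr_uminus)
qed simp

lemma pim_perm:
  fixes I :: "nat set" and h :: "(nat \<Rightarrow> real) \<Rightarrow> ennreal" and sg :: "nat \<Rightarrow> real"
  assumes I: "finite I" and bij: "bij_betw \<sigma> I I" and sg: "\<And>k. sg k = 1 \<or> sg k = -1"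
  and hm: "h \<in> borel_measurable (PiM I (\<lambda>_. lborel))"
  shows "(\<integral>\<^sup>+t. h (\<lambda>k\<in>I. sg k * t (\<sigma> k)) \<partial>PiM I (\<lambda>_. lborel)) = (\<integral>\<^sup>+t. h t \<partial>PiM I (\<lambda>_. lborel))"
proof -
  define T where "T t = (\<lambda>k\<in>I. sg k * t (\<sigma> k))" for t :: "nat \<Rightarrow> real"
  define \<tau> where "\<tau> = inv_into I \<sigma>"
  have \<sigma>I: "k \<in> I \<Longrightarrow> \<sigma> k \<in> I" for k using bij by (auto dest: bij_betwE)
  have \<tau>I: "j \<in> I \<Longrightarrow> \<tau> j \<in> I" for j using bij unfolding \<tau>_def by (meson bij_betwE bij_betw_inv_into)
  have \<sigma>\<tau>: "j \<in> I \<Longrightarrow> \<sigma> (\<tau> j) = j" for j using bij unfolding \<tau>_def by (simp add: bij_betw_inv_into_right)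
  have \<tau>\<sigma>: "k \<in> I \<Longrightarrow> \<tau> (\<sigma> k) = k" for k using bij unfolding \<tau>_def by (simp add: bij_betw_inv_into_left)
  have bij\<tau>: "bij_betw \<tau> I I" using bij unfolding \<tau>_def by (rule bij_betw_inv_into)
  have Tm: "T \<in> measurable (PiM I (\<lambda>_. lborel)) (PiM I (\<lambda>_. lborel))"
    unfolding T_def by (rule measurable_restrict) (use \<sigma>I in measurable)
  have D: "distr (PiM I (\<lambda>_. lborel)) (PiM I (\<lambda>_. lborel)) T = PiM I (\<lambda>_. lborel)"
  proof (rule lbp.PiM_eqI[OF I])
    show "sets (distr (PiM I (\<lambda>_. lborel)) (PiM I (\<lambda>_. lborel)) T) = sets (PiM I (\<lambda>_. lborel))" by simp
    fix A :: "nat \<Rightarrow> real set" assume A: "\<And>i. i \<in> I \<Longrightarrow> A i \<in> sets lborel"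
    have AS: "Pi\<^sub>E I A \<in> sets (PiM I (\<lambda>_. lborel))" using A I by (intro sets_PiM_I_finite) auto
    have pre: "T -` Pi\<^sub>E I A \<inter> space (PiM I (\<lambda>_. lborel)) = Pi\<^sub>E I (\<lambda>j. (\<lambda>x. sg (\<tau> j) * x) -` A (\<tau> j))"
    proof (intro set_eqI iffI)
      fix t assume t: "t \<in> T -` Pi\<^sub>E I A \<inter> space (PiM I (\<lambda>_. lborel))"
      then have e: "t \<in> extensional I" by (simp add: space_PiM PiE_def)
      have "\<forall>k\<in>I. sg k * t (\<sigma> k) \<in> A k" using t by (auto simp: T_def PiE_def Pi_def)
      then have "\<forall>j\<in>I. sg (\<tau> j) * t j \<in> A (\<tau> j)" using \<tau>I \<sigma>\<tau> by metis
      with e show "t \<in> Pi\<^sub>E I (\<lambda>j. (\<lambda>x. sg (\<tau> j) * x) -` A (\<tau> j))" by (auto simp: PiE_def Pi_def)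
    next
      fix t assume t: "t \<in> Pi\<^sub>E I (\<lambda>j. (\<lambda>x. sg (\<tau> j) * x) -` A (\<tau> j))"
      then have e: "t \<in> extensional I" by (simp add: PiE_def)
      have "\<forall>j\<in>I. sg (\<tau> j) * t j \<in> A (\<tau> j)" using t by (auto simp: PiE_def Pi_def)
      then have "\<forall>k\<in>I. sg k * t (\<sigma> k) \<in> A k" using \<sigma>I \<tau>\<sigma> by metis
      with e show "t \<in> T -` Pi\<^sub>E I A \<inter> space (PiM I (\<lambda>_. lborel))"
        by (auto simp: T_def space_PiM PiE_def Pi_def)
    qed
    have "emeasure (distr (PiM I (\<lambda>_. lborel)) (PiM I (\<lambda>_. lborel)) T) (Pi\<^sub>E I A)
       = emeasure (PiM I (\<lambda>_. lborel)) (T -` Pi\<^sub>E I A \<inter> space (PiM I (\<lambda>_. lborel)))"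
      by (rule emeasure_distr[OF Tm AS])
    also have "\<dots> = (\<Prod>j\<in>I. emeasure lborel ((\<lambda>x. sg (\<tau> j) * x) -` A (\<tau> j)))"
      unfolding pre
    proof (rule lbp.emeasure_PiM[OF I])
      fix j assume j: "j \<in> I"
      have mm: "(\<lambda>x::real. sg (\<tau> j) * x) \<in> measurable lborel lborel" by measurable
      show "(\<lambda>x. sg (\<tau> j) * x) -` A (\<tau> j) \<in> sets lborel"
        using measurable_sets[OF mm A[OF \<tau>I[OF j]]] by simp
    qed
    also have "\<dots> = (\<Prod>j\<in>I. emeasure lborel (A (\<tau> j)))"
      using A \<tau>I by (intro prod.cong refl lborel_refl sg) auto
    also have "\<dots> = (\<Prod>k\<in>I. emeasure lborel (A k))"
      using prod.reindex_bij_betw[OF bij\<tau>, of "\<lambda>k. emeasure lborel (A k)"] by simp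
    finally show "emeasure (distr (PiM I (\<lambda>_. lborel)) (PiM I (\<lambda>_. lborel)) T) (Pi\<^sub>E I A) = (\<Prod>k\<in>I. emeasure lborel (A k))" .
  qed
  have "(\<integral>\<^sup>+t. h (T t) \<partial>PiM I (\<lambda>_. lborel)) = (\<integral>\<^sup>+t. h t \<partial>distr (PiM I (\<lambda>_. lborel)) (PiM I (\<lambda>_. lborel)) T)"
    by (rule nn_integral_distr[symmetric, OF Tm]) (use hm in simp)
  also have "\<dots> = (\<integral>\<^sup>+t. h t \<partial>PiM I (\<lambda>_. lborel))" by (simp add: D)
  finally show ?thesis unfolding T_def .
qed

lemma pim1:
  fixes I :: "nat set" and h :: "(nat \<Rightarrow> real) \<Rightarrow> ennreal" and c :: real
  assumes I: "finite I" "j \<in> I" and c: "c \<noteq> 0"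
  and hm: "h \<in> borel_measurable (PiM I (\<lambda>_. lborel))"
  shows "(\<integral>\<^sup>+t. h (t(j := c * t j)) \<partial>PiM I (\<lambda>_. lborel)) = ennreal (1/\<bar>c\<bar>) * (\<integral>\<^sup>+t. h t \<partial>PiM I (\<lambda>_. lborel))"
proof -
  define J where "J = I - {j}"
  have IJ: "I = insert j J" and J: "finite J" "j \<notin> J" using I by (auto simp: J_def)
  note [measurable] = hm[unfolded IJ]
  have m: "(\<lambda>t. t(j := c * t j)) \<in> measurable (PiM (insert j J) (\<lambda>_. lborel)) (PiM (insert j J) (\<lambda>_. lborel))"
    by (rule measurable_fun_upd[where J="insert j J"]) (auto, measurable)
  have "(\<integral>\<^sup>+t. h (t(j := c * t j)) \<partial>PiM I (\<lambda>_. lborel)) = (\<integral>\<^sup>+x. \<integral>\<^sup>+y. h (x(j := c * y)) \<partial>lborel \<partial>PiM J (\<lambda>_. lborel))"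
    unfolding IJ using J by (subst lbp.product_nn_integral_insert) (auto intro: measurable_comp[OF m, unfolded comp_def])
  also have "\<dots> = (\<integral>\<^sup>+x. ennreal (1/\<bar>c\<bar>) * \<integral>\<^sup>+y. h (x(j := y)) \<partial>lborel \<partial>PiM J (\<lambda>_. lborel))"
  proof (rule nn_integral_cong)
    fix x :: "nat \<Rightarrow> real" assume x: "x \<in> space (PiM J (\<lambda>_. lborel))"
    have "(\<lambda>y. h (x(j := y))) \<in> borel_measurable borel"
      using measurable_comp[OF measurable_component_update[OF x J(2)] hm[unfolded IJ]] by (simp add: comp_def)
    from affine_sub[OF this c, of 0] show "(\<integral>\<^sup>+y. h (x(j := c * y)) \<partial>lborel) = ennreal (1/\<bar>c\<bar>) * \<integral>\<^sup>+y. h (x(j := y)) \<partial>lborel"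
      by simp
  qed
  also have "\<dots> = ennreal (1/\<bar>c\<bar>) * (\<integral>\<^sup>+x. \<integral>\<^sup>+y. h (x(j := y)) \<partial>lborel \<partial>PiM J (\<lambda>_. lborel))"
    by (rule nn_integral_cmult) (use J in measurable)
  also have "(\<integral>\<^sup>+x. \<integral>\<^sup>+y. h (x(j := y)) \<partial>lborel \<partial>PiM J (\<lambda>_. lborel)) = (\<integral>\<^sup>+t. h t \<partial>PiM I (\<lambda>_. lborel))"
    unfolding IJ using J by (subst lbp.product_nn_integral_insert) auto
  finally show ?thesis .
qed



definition rr :: "complex \<Rightarrow> nat \<Rightarrow> real" where "rr z k = Im (z ^ (k+1)) / Im z"
definition wA :: "complex \<Rightarrow> nat \<Rightarrow> real" where "wA z k = - rr z k"
definition wB :: "complex \<Rightarrow> nat \<Rightarrow> real" where "wB z k = - Re (z * (z ^ k - complex_of_real (rr z k)))"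
definition wQ :: "complex \<Rightarrow> nat \<Rightarrow> complex" where "wQ z k = of_nat (k+1) * z ^ k - complex_of_real (rr z k)"
definition Af :: "nat \<Rightarrow> complex \<Rightarrow> (nat \<Rightarrow> real) \<Rightarrow> real" where "Af n z t = (\<Sum>k=1..n-1. t k * wA z k)"
definition Bf :: "nat \<Rightarrow> complex \<Rightarrow> (nat \<Rightarrow> real) \<Rightarrow> real" where "Bf n z t = (\<Sum>k=1..n-1. t k * wB z k)"
definition Qf :: "nat \<Rightarrow> complex \<Rightarrow> (nat \<Rightarrow> real) \<Rightarrow> complex" where "Qf n z t = (\<Sum>k=1..n-1. complex_of_real (t k) * wQ z k)"
definition coef :: "nat \<Rightarrow> complex \<Rightarrow> (nat \<Rightarrow> real) \<Rightarrow> nat \<Rightarrow> real" where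
  "coef n z t j = (if j = 0 then Bf n z t else if j = 1 then Af n z t else t (j - 1))"

lemma split_sum:
  fixes f :: "nat \<Rightarrow> 'a::comm_monoid_add"
  assumes "1 \<le> n"
  shows "(\<Sum>j=0..n. f j) = f 0 + f 1 + (\<Sum>k=1..n-1. f (k+1))"
  using assms
proof (induction n rule: nat_induct_at_least)
  case base then show ?case by simp
next
  case (Suc n)
  have "(\<Sum>k=1..Suc n - 1. f (k+1)) = (\<Sum>k=1..n-1. f (k+1)) + f (Suc n)"
    using Suc.hyps by (cases n) (auto simp: sum.cl_ivl_Suc)
  then show ?case using Suc by (simp add: ac_simps)
qed

lemma rr_mult: "Im z \<noteq> 0 \<Longrightarrow> rr z k * Im z = Im (z ^ (k+1))"
  by (simp add: rr_def)

lemma term_real: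
  assumes "Im z \<noteq> 0"
  shows "z * (z ^ k - complex_of_real (rr z k)) = complex_of_real (- wB z k)"
proof -
  have "Im (z * (z ^ k - complex_of_real (rr z k))) = 0"
  proof -
    have "z * (z ^ k - complex_of_real (rr z k)) = z ^ (k+1) - complex_of_real (rr z k) * z"
      by (simp add: algebra_simps)
    then show ?thesis using rr_mult[OF assms, of k] by (simp add: mult.commute)
  qed
  then show ?thesis by (simp add: wB_def complex_eq_iff)
qed

lemma E_eq:
  assumes "Im z \<noteq> 0"
  shows "z * (\<Sum>k=1..n-1. complex_of_real (t k) * (z ^ k - complex_of_real (rr z k))) = complex_of_real (- Bf n z t)"
proof -
  have "z * (\<Sum>k=1..n-1. complex_of_real (t k) * (z ^ k - complex_of_real (rr z k)))
      = (\<Sum>k=1..n-1. complex_of_real (t k) * (z * (z ^ k - complex_of_real (rr z k))))"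
    by (simp add: sum_distrib_left algebra_simps)
  also have "\<dots> = (\<Sum>k=1..n-1. complex_of_real (- (t k * wB z k)))"
    using term_real[OF assms] by simp
  also have "\<dots> = complex_of_real (- Bf n z t)"
    by (simp add: Bf_def sum_negf)
  finally show ?thesis .
qed

lemma Dz_iff:
  assumes "Im z \<noteq> 0"
  shows "t \<in> Dz n z \<longleftrightarrow> (\<forall>k\<in>{1..n-1}. \<bar>t k\<bar> \<le> 1) \<and> \<bar>Bf n z t\<bar> \<le> 1 \<and> \<bar>Af n z t\<bar> \<le> 1"
proof -
  have 1: "cmod (z * (\<Sum>k=1..n-1. complex_of_real (t k) * (z ^ k - complex_of_real (Im (z ^ (k+1)) / Im z)))) = \<bar>Bf n z t\<bar>"
    using E_eq[OF assms, where n=n and t=t] unfolding rr_def by simp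
  have 2: "(1 / Im z) * (\<Sum>k=1..n-1. t k * Im (z ^ (k+1))) = - Af n z t"
    using assms by (simp add: Af_def wA_def rr_def sum_distrib_left sum_negf)
  show ?thesis by (simp only: Dz_def mem_Collect_eq 1 2 abs_minus_cancel)
qed

lemma coef_bound_iff:
  assumes "1 \<le> n"
  shows "((\<forall>k\<in>{1..n-1}. \<bar>t k\<bar> \<le> 1) \<and> \<bar>Bf n z t\<bar> \<le> 1 \<and> \<bar>Af n z t\<bar> \<le> 1) \<longleftrightarrow> (\<forall>j\<in>{0..n}. \<bar>coef n z t j\<bar> \<le> 1)"
proof
  assume H: "(\<forall>k\<in>{1..n-1}. \<bar>t k\<bar> \<le> 1) \<and> \<bar>Bf n z t\<bar> \<le> 1 \<and> \<bar>Af n z t\<bar> \<le> 1"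
  show "\<forall>j\<in>{0..n}. \<bar>coef n z t j\<bar> \<le> 1"
  proof
    fix j assume "j \<in> {0..n}"
    then show "\<bar>coef n z t j\<bar> \<le> 1"
    proof (cases "j \<le> 1")
      case False
      then have "j - 1 \<in> {1..n-1}" using \<open>j \<in> {0..n}\<close> by auto
      then show ?thesis using H False by (auto simp: coef_def)
    qed (use H in \<open>auto simp: coef_def le_Suc_eq\<close>)
  qed
next
  assume H: "\<forall>j\<in>{0..n}. \<bar>coef n z t j\<bar> \<le> 1"
  have "\<bar>t k\<bar> \<le> 1" if "k \<in> {1..n-1}" for k
    using H[rule_format, of "k+1"] that by (auto simp: coef_def)
  moreover have "\<bar>Bf n z t\<bar> \<le> 1" using H[rule_format, of 0] by (simp add: coef_def)
  moreover have "\<bar>Af n z t\<bar> \<le> 1" using H[rule_format, of 1] assms by (simp add: coef_def)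
  ultimately show "(\<forall>k\<in>{1..n-1}. \<bar>t k\<bar> \<le> 1) \<and> \<bar>Bf n z t\<bar> \<le> 1 \<and> \<bar>Af n z t\<bar> \<le> 1" by blast
qed

lemma P0:
  assumes "1 \<le> n" "Im z \<noteq> 0"
  shows "(\<Sum>j=0..n. complex_of_real (coef n z t j) * z ^ j) = 0"
proof -
  have e1: "(\<Sum>j=0..n. complex_of_real (coef n z t j) * z ^ j)
     = complex_of_real (Bf n z t) + complex_of_real (Af n z t) * z + (\<Sum>k=1..n-1. complex_of_real (t k) * z ^ (k+1))"
    by (subst split_sum[OF assms(1)]) (simp add: coef_def)
  have e2: "(\<Sum>k=1..n-1. complex_of_real (t k) * z ^ (k+1)) + complex_of_real (Af n z t) * z
      = z * (\<Sum>k=1..n-1. complex_of_real (t k) * (z ^ k - complex_of_real (rr z k)))"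
    by (simp add: Af_def wA_def sum_distrib_left sum_distrib_right algebra_simps sum_subtractf sum_negf)
  show ?thesis using E_eq[OF assms(2), where n=n and t=t] e1 e2 by (simp add: algebra_simps)
qed

lemma P1:
  assumes "1 \<le> n"
  shows "z * Qf n z t = (\<Sum>j=0..n. of_nat j * complex_of_real (coef n z t j) * z ^ j)"
proof -
  have "(\<Sum>j=0..n. of_nat j * complex_of_real (coef n z t j) * z ^ j)
     = complex_of_real (Af n z t) * z + (\<Sum>k=1..n-1. of_nat (k+1) * complex_of_real (t k) * z ^ (k+1))"
    by (subst split_sum[OF assms(1)]) (simp add: coef_def)
  also have "\<dots> = z * Qf n z t"
    by (simp add: Qf_def wQ_def Af_def wA_def sum_distrib_left sum_distrib_right algebra_simps sum_subtractf sum_negf)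
  finally show ?thesis by simp
qed

definition Lmap :: "nat \<Rightarrow> complex \<Rightarrow> (nat \<Rightarrow> real) \<Rightarrow> (nat \<Rightarrow> real)" where
  "Lmap n z t = (\<lambda>k\<in>{1..n-1}. coef n z t (n - 1 - k))"

lemma uniq:
  assumes "Im w \<noteq> 0" "complex_of_real x + complex_of_real y * w = 0"
  shows "x = 0 \<and> y = 0"
proof -
  have "Im (complex_of_real x + complex_of_real y * w) = 0" using assms(2) by simp
  then have "y = 0" using assms(1) by simp
  then show ?thesis using assms(2) by simp
qed

lemma rev_sum: "(\<Sum>j=0..n. f (n - j)) = (\<Sum>j=0..(n::nat). (f j :: 'a::comm_monoid_add))"
proof -
  have "(\<Sum>j=0..n. f (n - j)) = (\<Sum>j=0..n. f (n - (n + 0 - j)))"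
    by (rule sum.atLeastAtMost_rev)
  also have "\<dots> = (\<Sum>j=0..n. f j)" by (rule sum.cong) auto
  finally show ?thesis .
qed

lemma all_rev: "(\<forall>j\<in>{0..n::nat}. P (n - j)) \<longleftrightarrow> (\<forall>j\<in>{0..n}. P j)"
proof
  assume H: "\<forall>j\<in>{0..n}. P (n - j)"
  show "\<forall>j\<in>{0..n}. P j"
  proof
    fix j assume j: "j \<in> {0..n}"
    then have "n - j \<in> {0..n}" by auto
    then have "P (n - (n - j))" using H by blast
    then show "P j" using j by simp
  qed
next
  assume H: "\<forall>j\<in>{0..n}. P j"
  show "\<forall>j\<in>{0..n}. P (n - j)" using H by auto
qed

lemma inv_pow:
  fixes z :: complex
  assumes "z \<noteq> 0" "j \<le> n"
  shows "(1/z) ^ j * z ^ n = z ^ (n - j)"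
proof -
  have "z ^ n = z ^ (n - j) * z ^ j" using assms(2) by (simp flip: power_add)
  then show ?thesis using assms(1) by (simp add: power_one_over field_simps)
qed

lemma Im_inv_nz: "Im z \<noteq> 0 \<Longrightarrow> Im (1/z) \<noteq> 0"
  by (cases "z = 0") (auto simp: Im_divide' sum_power2_gt_zero_iff)

lemma coef_inv:
  assumes n: "2 \<le> n" and z: "Im z \<noteq> 0" and j: "j \<in> {0..n}"
  shows "coef n (1/z) (Lmap n z t) j = coef n z t (n - j)"
proof -
  let ?c = "coef n z t" and ?d = "coef n (1/z) (Lmap n z t)"
  have z0: "z \<noteq> 0" using z by auto
  have hi: "?d j = ?c (n - j)" if "2 \<le> j" "j \<le> n" for j
  proof -
    have "j - 1 \<in> {1..n-1}" using that by auto
    moreover have "n - 1 - (j - 1) = n - j" using that by auto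
    ultimately show ?thesis using that by (simp add: coef_def Lmap_def)
  qed
  have S1: "(\<Sum>j=0..n. complex_of_real (?d j) * (1/z) ^ j) = 0"
    by (rule P0) (use n Im_inv_nz[OF z] in auto)
  have "(\<Sum>j=0..n. complex_of_real (?c (n - j)) * (1/z) ^ j) * z ^ n
      = (\<Sum>j=0..n. complex_of_real (?c (n - j)) * z ^ (n - j))"
    by (simp add: sum_distrib_right mult.assoc inv_pow[OF z0])
  also have "\<dots> = (\<Sum>j=0..n. complex_of_real (?c j) * z ^ j)"
    by (rule rev_sum[where f="\<lambda>j. complex_of_real (?c j) * z ^ j"])
  also have "\<dots> = 0" by (rule P0) (use n z in auto)
  finally have S2: "(\<Sum>j=0..n. complex_of_real (?c (n - j)) * (1/z) ^ j) = 0"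
    using z0 by simp
  have "(\<Sum>j=0..n. complex_of_real (?d j - ?c (n - j)) * (1/z) ^ j) = 0"
    using S1 S2 by (simp add: algebra_simps sum_subtractf)
  then have "complex_of_real (?d 0 - ?c n) + complex_of_real (?d 1 - ?c (n - 1)) * (1/z)
      + (\<Sum>k=1..n-1. complex_of_real (?d (k+1) - ?c (n - (k+1))) * (1/z) ^ (k+1)) = 0"
    using n by (subst (asm) split_sum) auto
  moreover have "(\<Sum>k=1..n-1. complex_of_real (?d (k+1) - ?c (n - (k+1))) * (1/z) ^ (k+1)) = 0"
    by (rule sum.neutral) (use hi in auto)
  ultimately have "complex_of_real (?d 0 - ?c n) + complex_of_real (?d 1 - ?c (n - 1)) * (1/z) = 0"
    by simp
  from uniq[OF Im_inv_nz[OF z] this] have "?d 0 = ?c n" "?d 1 = ?c (n - 1)" by auto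
  then show ?thesis using hi j by (cases "j = 0"; cases "j = 1") auto
qed

lemma Dz_inv:
  assumes n: "2 \<le> n" and z: "Im z \<noteq> 0"
  shows "Lmap n z t \<in> Dz n (1/z) \<longleftrightarrow> t \<in> Dz n z"
proof -
  have "Lmap n z t \<in> Dz n (1/z) \<longleftrightarrow> (\<forall>j\<in>{0..n}. \<bar>coef n (1/z) (Lmap n z t) j\<bar> \<le> 1)"
    using n by (subst Dz_iff[OF Im_inv_nz[OF z]], intro coef_bound_iff) auto
  also have "\<dots> \<longleftrightarrow> (\<forall>j\<in>{0..n}. \<bar>coef n z t (n - j)\<bar> \<le> 1)"
    using coef_inv[OF n z] by auto
  also have "\<dots> \<longleftrightarrow> (\<forall>j\<in>{0..n}. \<bar>coef n z t j\<bar> \<le> 1)"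
    by (rule all_rev)
  also have "\<dots> \<longleftrightarrow> t \<in> Dz n z"
    using n by (subst Dz_iff[OF z], intro coef_bound_iff[symmetric]) auto
  finally show ?thesis .
qed

lemma Q_inv:
  assumes n: "2 \<le> n" and z: "Im z \<noteq> 0"
  shows "z ^ (n - 1) * Qf n (1/z) (Lmap n z t) = - (z * Qf n z t)"
proof -
  let ?c = "coef n z t" and ?d = "coef n (1/z) (Lmap n z t)"
  have z0: "z \<noteq> 0" using z by auto
  have "(1/z) * Qf n (1/z) (Lmap n z t) = (\<Sum>j=0..n. of_nat j * complex_of_real (?d j) * (1/z) ^ j)"
    by (rule P1) (use n in auto)
  also have "\<dots> = (\<Sum>j=0..n. of_nat j * complex_of_real (?c (n - j)) * (1/z) ^ j)"
    using coef_inv[OF n z] by (intro sum.cong) auto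
  finally have e1: "(1/z) * Qf n (1/z) (Lmap n z t) = \<dots>" .
  have "((1/z) * Qf n (1/z) (Lmap n z t)) * z ^ n = (\<Sum>j=0..n. of_nat j * complex_of_real (?c (n - j)) * z ^ (n - j))"
    unfolding e1 by (simp add: sum_distrib_right mult.assoc inv_pow[OF z0])
  also have "\<dots> = (\<Sum>j=0..n. of_nat (n - j) * complex_of_real (?c j) * z ^ j)"
  proof -
    have "(\<Sum>j=0..n. of_nat (n - j) * complex_of_real (?c j) * z ^ j)
        = (\<Sum>j=0..n. of_nat (n - (n - j)) * complex_of_real (?c (n - j)) * z ^ (n - j))"
      by (rule rev_sum[where f="\<lambda>j. of_nat (n - j) * complex_of_real (?c j) * z ^ j", symmetric])
    also have "\<dots> = (\<Sum>j=0..n. of_nat j * complex_of_real (?c (n - j)) * z ^ (n - j))"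
      by (rule sum.cong) auto
    finally show ?thesis by simp
  qed
  also have "\<dots> = of_nat n * (\<Sum>j=0..n. complex_of_real (?c j) * z ^ j) - (\<Sum>j=0..n. of_nat j * complex_of_real (?c j) * z ^ j)"
    by (simp add: sum_distrib_left sum_subtractf[symmetric] of_nat_diff algebra_simps)
  also have "\<dots> = - (z * Qf n z t)"
    using P0[of n z t] P1[of n z t] n z by simp
  finally have "((1/z) * Qf n (1/z) (Lmap n z t)) * z ^ n = - (z * Qf n z t)" .
  moreover have "((1/z) * Qf n (1/z) (Lmap n z t)) * z ^ n = z ^ (n - 1) * Qf n (1/z) (Lmap n z t)"
  proof -
    have "z ^ n = z * z ^ (n - 1)" using n by (simp flip: power_Suc)
    then show ?thesis using z0 by simp
  qed
  ultimately show ?thesis by simp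
qed



lemma wB_eq: "Im z \<noteq> 0 \<Longrightarrow> wB z k = - Re (z ^ (k+1)) + Re z * rr z k"
  by (simp add: wB_def algebra_simps)

lemma det_eq:
  assumes z: "Im z \<noteq> 0" and m: "1 \<le> m"
  shows "wA z (m-1) * wB z m - wA z m * wB z (m-1) = - (cmod z ^ (2*m))"
proof -
  define u where "u = z ^ m"
  have zu: "z ^ (m+1) = z * u" by (simp add: u_def)
  have mm: "m - 1 + 1 = m" using m by simp
  have r1: "rr z (m-1) = Im u / Im z" by (simp only: rr_def mm u_def)
  have r2: "rr z m = Im (z*u) / Im z" by (simp only: rr_def zu)
  have b1: "wB z m = - Re (z^(m+1)) + Re z * rr z m" by (rule wB_eq[OF z])
  have b2: "wB z (m-1) = - Re (z^m) + Re z * rr z (m-1)" using wB_eq[OF z, of "m-1"] by (simp only: mm)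
  have "wA z (m-1) * wB z m - wA z m * wB z (m-1) = rr z (m-1) * Re (z^(m+1)) - rr z m * Re (z^m)"
    by (simp only: wA_def b1 b2, algebra)
  also have "\<dots> = (Im u * Re (z*u) - Im (z*u) * Re u) / Im z"
    unfolding r1 r2 zu u_def[symmetric] using z by (simp add: field_simps)
  also have "Im u * Re (z*u) - Im (z*u) * Re u = - Im z * ((Re u)^2 + (Im u)^2)"
    by (simp add: power2_eq_square algebra_simps)
  also have "(Re u)^2 + (Im u)^2 = cmod z ^ (2*m)"
  proof -
    have "(cmod z ^ m)^2 = cmod z ^ (2*m)" by (metis power_mult mult.commute)
    then show ?thesis by (simp add: cmod_power2[symmetric] u_def norm_power)
  qed
  finally show ?thesis using z by simp
qed

lemma wB1: "Im z \<noteq> 0 \<Longrightarrow> wB z 1 = cmod z ^ 2"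
proof -
  assume z: "Im z \<noteq> 0"
  have "rr z 1 = 2 * Re z" using z by (simp add: rr_def power2_eq_square)
  then show ?thesis using z unfolding cmod_power2 by (simp add: wB_eq power2_eq_square algebra_simps)
qed

lemma lin_split:
  fixes w :: "nat \<Rightarrow> real"
  assumes "finite I" "j1 \<in> I" "j2 \<in> I" "j1 \<noteq> j2"
  shows "(\<Sum>k\<in>I. t k * w k) = w j1 * t j1 + w j2 * t j2 + (\<Sum>k\<in>I-{j1,j2}. t k * w k)"
proof -
  have "(\<Sum>k\<in>I. t k * w k) = t j1 * w j1 + (\<Sum>k\<in>I-{j1}. t k * w k)"
    using assms by (simp add: sum.remove)
  also have "(\<Sum>k\<in>I-{j1}. t k * w k) = t j2 * w j2 + (\<Sum>k\<in>I-{j1}-{j2}. t k * w k)"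
    using assms by (intro sum.remove) auto
  also have "I-{j1}-{j2} = I-{j1,j2}" by auto
  finally show ?thesis by (simp add: ac_simps)
qed

lemma Lmap_int:
  fixes h :: "(nat \<Rightarrow> real) \<Rightarrow> ennreal"
  assumes n: "2 \<le> n" and z: "Im z \<noteq> 0" and hm: "h \<in> borel_measurable (lebR n)"
  shows "(\<integral>\<^sup>+t. h (Lmap n z t) \<partial>lebR n) = ennreal (1 / cmod z ^ (2*(n-1))) * (\<integral>\<^sup>+t. h t \<partial>lebR n)"
proof (cases "n = 2")
  case True
  have L1: "lebR 2 = PiM {1} (\<lambda>_. lborel)" by (simp add: lebR_def)
  have "(\<integral>\<^sup>+t. h (Lmap n z t) \<partial>lebR n) = (\<integral>\<^sup>+t. h (t(1 := wB z 1 * t 1)) \<partial>PiM {1} (\<lambda>_. lborel))"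
    unfolding True L1
  proof (rule nn_integral_cong)
    fix t :: "nat \<Rightarrow> real" assume "t \<in> space (PiM {1} (\<lambda>_. lborel))"
    then have e: "t k = undefined" if "k \<noteq> 1" for k using that by (auto simp: space_PiM PiE_def extensional_def)
    have "Lmap 2 z t = t(1 := wB z 1 * t 1)"
      by (auto simp: Lmap_def coef_def Bf_def fun_eq_iff e)
    then show "h (Lmap 2 z t) = h (t(1 := wB z 1 * t 1))" by simp
  qed
  also have "\<dots> = ennreal (1/\<bar>wB z 1\<bar>) * (\<integral>\<^sup>+t. h t \<partial>PiM {1} (\<lambda>_. lborel))"
    by (rule pim1) (use hm z wB1[OF z] in \<open>auto simp: lebR_def True\<close>)
  finally show ?thesis using wB1[OF z] by (simp add: lebR_def True)
next
  case False
  define m where "m = n - 1"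
  have m: "2 \<le> m" "n - 1 = m" using n False by (auto simp: m_def)
  define I where "I = {1..m}"
  define j1 where "j1 = m - 1"
  define j2 where "j2 = m"
  have J: "finite I" "j1 \<in> I" "j2 \<in> I" "j1 \<noteq> j2" using m by (auto simp: I_def j1_def j2_def)
  define \<sigma> where "\<sigma> k = (if k \<le> m - 2 then m - 1 - k else k)" for k
  have bij: "bij_betw \<sigma> I I"
    by (rule bij_betwI[where g=\<sigma>]) (auto simp: \<sigma>_def I_def)
  define a0 where "a0 t = (\<Sum>k\<in>I-{j1,j2}. t k * wA z k)" for t :: "nat \<Rightarrow> real"
  define b0 where "b0 t = (\<Sum>k\<in>I-{j1,j2}. t k * wB z k)" for t :: "nat \<Rightarrow> real"
  let ?p = "wA z j1" and ?q = "wA z j2" and ?r = "wB z j1" and ?s = "wB z j2"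
  define S where "S t = t(j1 := ?p * t j1 + ?q * t j2 + a0 t, j2 := ?r * t j1 + ?s * t j2 + b0 t)" for t
  have Af: "Af n z t = ?p * t j1 + ?q * t j2 + a0 t" for t
    unfolding Af_def a0_def m(2) I_def[symmetric] using J by (rule lin_split)
  have Bf: "Bf n z t = ?r * t j1 + ?s * t j2 + b0 t" for t
    unfolding Bf_def b0_def m(2) I_def[symmetric] using J by (rule lin_split)
  have LS: "Lmap n z t = (\<lambda>k\<in>I. 1 * (S t) (\<sigma> k))" for t
  proof
    fix k show "Lmap n z t k = (\<lambda>k\<in>I. 1 * (S t) (\<sigma> k)) k"
    proof (cases "k \<in> I")
      case False then show ?thesis using m by (auto simp: Lmap_def I_def)
    next
      case True
      consider "k \<le> m - 2" | "k = m - 1" | "k = m" using True by (force simp: I_def)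
      then show ?thesis
      proof cases
        case 1
        then have "m - k \<noteq> 0" "m - k \<noteq> 1" "m - k - 1 = m - 1 - k" "n - 1 - k = m - k" using True m by (auto simp: I_def)
        moreover have "m - 1 - k \<noteq> j1" "m - 1 - k \<noteq> j2" using 1 True m by (auto simp: I_def j1_def j2_def)
        ultimately show ?thesis using True 1 m by (simp add: Lmap_def coef_def S_def \<sigma>_def I_def)
      next
        case 2
        have k1: "k \<in> {1..n-1}" using True m by (simp add: I_def)
        have e1: "Lmap n z t k = coef n z t (n - 1 - k)" using k1 by (simp add: Lmap_def)
        have e2: "n - 1 - k = 1" using 2 m by auto
        have e3: "\<sigma> k = j1" using 2 m by (simp add: \<sigma>_def j1_def)
        have e4: "S t j1 = ?p * t j1 + ?q * t j2 + a0 t" using J by (simp add: S_def)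
        have "Lmap n z t k = coef n z t 1" by (simp only: e1 e2)
        also have "\<dots> = Af n z t" by (simp add: coef_def)
        finally show ?thesis using True by (simp add: e3 e4 Af)
      next
        case 3
        have k1: "k \<in> {1..n-1}" using True m by (simp add: I_def)
        have e1: "Lmap n z t k = coef n z t (n - 1 - k)" using k1 by (simp add: Lmap_def)
        have e2: "n - 1 - k = 0" using 3 m by auto
        have e3: "\<sigma> k = j2" using 3 m by (simp add: \<sigma>_def j2_def)
        have e4: "S t j2 = ?r * t j1 + ?s * t j2 + b0 t" using J by (simp add: S_def)
        have "Lmap n z t k = coef n z t 0" by (simp only: e1 e2)
        also have "\<dots> = Bf n z t" by (simp add: coef_def)
        finally show ?thesis using True by (simp add: e3 e4 Bf)
      qed
    qed
  qed
  have L: "lebR n = PiM I (\<lambda>_. lborel)" unfolding lebR_def I_def m(2) ..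
  note hm' = hm[unfolded L]
  have sm: "(\<lambda>u::nat\<Rightarrow>real. \<lambda>k\<in>I. 1 * u (\<sigma> k)) \<in> measurable (PiM I (\<lambda>_. lborel)) (PiM I (\<lambda>_. lborel))"
  proof (intro measurable_restrict)
    fix k assume "k \<in> I"
    then have sk: "\<sigma> k \<in> I" using bij by (auto dest: bij_betwE)
    show "(\<lambda>x::nat\<Rightarrow>real. 1 * x (\<sigma> k)) \<in> measurable (PiM I (\<lambda>_. lborel)) lborel"
      using measurable_component_singleton[OF sk, of "\<lambda>_. lborel"] by simp
  qed
  have h'm: "(\<lambda>u. h (\<lambda>k\<in>I. 1 * u (\<sigma> k))) \<in> borel_measurable (PiM I (\<lambda>_. lborel))"
    using measurable_comp[OF sm hm'] by (simp add: comp_def)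
  have a0m: "a0 \<in> borel_measurable (PiM I (\<lambda>_. lborel))" unfolding a0_def by measurable
  have b0m: "b0 \<in> borel_measurable (PiM I (\<lambda>_. lborel))" unfolding b0_def by measurable
  have det: "?p * ?s - ?q * ?r = - (cmod z ^ (2*m))"
    using det_eq[OF z, of m] m by (simp add: j1_def j2_def)
  have detnz: "?p * ?s - ?q * ?r \<noteq> 0" using det z by (auto simp: complex_eq_iff)
  have "(\<integral>\<^sup>+t. h (Lmap n z t) \<partial>lebR n) = (\<integral>\<^sup>+t. (\<lambda>u. h (\<lambda>k\<in>I. 1 * u (\<sigma> k))) (S t) \<partial>PiM I (\<lambda>_. lborel))"
    unfolding L LS by simp
  also have "\<dots> = ennreal (1/\<bar>?p * ?s - ?q * ?r\<bar>) * (\<integral>\<^sup>+u. h (\<lambda>k\<in>I. 1 * u (\<sigma> k)) \<partial>PiM I (\<lambda>_. lborel))"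
    unfolding S_def
    by (rule pim2[OF J detnz h'm a0m b0m]) (auto simp: a0_def b0_def intro!: sum.cong)
  also have "(\<integral>\<^sup>+u. h (\<lambda>k\<in>I. 1 * u (\<sigma> k)) \<partial>PiM I (\<lambda>_. lborel)) = (\<integral>\<^sup>+u. h u \<partial>PiM I (\<lambda>_. lborel))"
    by (rule pim_perm[OF J(1) bij _ hm']) simp
  finally show ?thesis using det m by (simp add: L)
qed




definition Nmap :: "nat \<Rightarrow> (nat \<Rightarrow> real) \<Rightarrow> (nat \<Rightarrow> real)" where
  "Nmap n t = (\<lambda>k\<in>{1..n-1}. (-1) ^ k * t k)"

lemma m1c: "(-1::complex) ^ k = complex_of_real ((-1) ^ k)" by simp

lemma pm: "(-z::complex) ^ k = complex_of_real ((-1) ^ k) * z ^ k"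
  using power_minus[of z k] by (simp only: m1c)

lemma rr_neg: "rr (-z) k = (-1) ^ k * rr z k"
proof -
  have "Im ((-z) ^ (k+1)) = (-1) ^ (k+1) * Im (z ^ (k+1))" unfolding pm by simp
  then show ?thesis by (simp add: rr_def)
qed

lemma wA_neg: "wA (-z) k = (-1) ^ k * wA z k" by (simp add: wA_def rr_neg)

lemma wB_neg: "wB (-z) k = - ((-1) ^ k * wB z k)"
proof -
  have eq: "-z * ((-z) ^ k - complex_of_real (rr (-z) k)) = complex_of_real (- ((-1) ^ k)) * (z * (z ^ k - complex_of_real (rr z k)))"
    unfolding pm rr_neg of_real_mult by (simp add: algebra_simps)
  show ?thesis unfolding wB_def by (subst eq) (simp add: algebra_simps)
qed

lemma wQ_neg: "wQ (-z) k = complex_of_real ((-1) ^ k) * wQ z k"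
  unfolding wQ_def pm rr_neg of_real_mult by (simp add: algebra_simps)


lemma sq_sign: "((-1::real) ^ k) * ((-1) ^ k) = 1"
  by (simp flip: power_add)

lemma sq_term: "((-1::real) ^ k * a) * ((-1) ^ k * b) = a * b"
proof -
  have "((-1::real) ^ k * a) * ((-1) ^ k * b) = ((-1) ^ k * (-1) ^ k) * (a * b)" by (simp only: mult_ac)
  then show ?thesis by (simp only: sq_sign mult_1)
qed

lemma sq_termc: "complex_of_real ((-1) ^ k * a) * (complex_of_real ((-1) ^ k) * b) = complex_of_real a * b"
proof -
  have "complex_of_real ((-1) ^ k * a) * (complex_of_real ((-1) ^ k) * b) = complex_of_real ((-1) ^ k * (-1) ^ k) * (complex_of_real a * b)"
    by (simp only: of_real_mult mult_ac)
  then show ?thesis by (simp only: sq_sign of_real_1 mult_1)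
qed

lemma Af_neg: "Af n (-z) (Nmap n t) = Af n z t"
  unfolding Af_def Nmap_def wA_neg by (intro sum.cong refl) (simp add: sq_term)

lemma Bf_neg: "Bf n (-z) (Nmap n t) = - Bf n z t"
proof -
  have "Bf n (-z) (Nmap n t) = (\<Sum>k=1..n-1. - (t k * wB z k))"
    unfolding Bf_def Nmap_def wB_neg
  proof (intro sum.cong refl)
    fix k assume "k \<in> {1..n-1}"
    then show "(\<lambda>k\<in>{1..n-1}. (-1) ^ k * t k) k * - ((-1) ^ k * wB z k) = - (t k * wB z k)"
      using sq_term[of k "t k" "wB z k"] by simp
  qed
  then show ?thesis by (simp add: Bf_def sum_negf)
qed

lemma Qf_neg: "Qf n (-z) (Nmap n t) = Qf n z t"
  unfolding Qf_def Nmap_def wQ_neg by (intro sum.cong refl) (simp add: sq_termc)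

lemma Dz_neg:
  assumes "Im z \<noteq> 0"
  shows "Nmap n t \<in> Dz n (-z) \<longleftrightarrow> t \<in> Dz n z"
proof -
  have z': "Im (-z) \<noteq> 0" using assms by simp
  have "\<bar>Nmap n t k\<bar> = \<bar>t k\<bar>" if "k \<in> {1..n-1}" for k
    using that by (simp add: Nmap_def abs_mult)
  then show ?thesis
    unfolding Dz_iff[OF assms] Dz_iff[OF z'] Af_neg Bf_neg by auto
qed

lemma rr_cnj: "rr (cnj z) k = rr z k"
  by (simp add: rr_def flip: complex_cnj_power) (simp add: divide_simps)

lemma wB_cnj: "wB (cnj z) k = wB z k"
proof -
  have eq: "cnj z * (cnj z ^ k - complex_of_real (rr (cnj z) k)) = cnj (z * (z ^ k - complex_of_real (rr z k)))"
    by (simp add: rr_cnj)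
  have rc: "Re (cnj w) = Re w" for w by simp
  show ?thesis unfolding wB_def by (subst eq) (simp only: rc)
qed

lemma Qf_cnj: "Qf n (cnj z) t = cnj (Qf n z t)"
  by (simp add: Qf_def wQ_def rr_cnj)

lemma Dz_cnj:
  assumes "Im z \<noteq> 0"
  shows "Dz n (cnj z) = Dz n z"
proof -
  have z': "Im (cnj z) \<noteq> 0" using assms by simp
  show ?thesis
    by (rule set_eqI) (simp only: Dz_iff[OF assms] Dz_iff[OF z'] Af_def Bf_def wA_def rr_cnj wB_cnj)
qed

definition G :: "nat \<Rightarrow> complex \<Rightarrow> (nat \<Rightarrow> real) \<Rightarrow> real" where
  "G n z t = indicator (Dz n z) t * (cmod (Qf n z t))\<^sup>2"

lemma G_alt:
  assumes "Im z \<noteq> 0"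
  shows "G n z = (\<lambda>t. (if (\<forall>k\<in>{1..n-1}. \<bar>t k\<bar> \<le> 1) \<and> \<bar>Bf n z t\<bar> \<le> 1 \<and> \<bar>Af n z t\<bar> \<le> 1 then 1 else 0) * (cmod (Qf n z t))\<^sup>2)"
  by (rule ext) (simp add: G_def indicator_def Dz_iff[OF assms])

lemma G_meas:
  assumes "Im z \<noteq> 0"
  shows "G n z \<in> borel_measurable (lebR n)"
  unfolding G_alt[OF assms] lebR_def Af_def Bf_def Qf_def by measurable

lemma G_nonneg: "0 \<le> G n z t" by (simp add: G_def)

lemma psi_eq:
  assumes "Im z \<noteq> 0"
  shows "psi n z = (1 / \<bar>Im z\<bar>) * enn2real (\<integral>\<^sup>+t. ennreal (G n z t) \<partial>lebR n)"
proof -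
  have "psi n z = (1 / \<bar>Im z\<bar>) * integral\<^sup>L (lebR n) (G n z)"
    unfolding psi_def set_lebesgue_integral_def G_def Qf_def wQ_def rr_def by simp
  also have "integral\<^sup>L (lebR n) (G n z) = enn2real (\<integral>\<^sup>+t. ennreal (G n z t) \<partial>lebR n)"
    by (rule integral_eq_nn_integral[OF G_meas[OF assms]]) (simp add: G_nonneg)
  finally show ?thesis .
qed


lemma wQ1: "Im z \<noteq> 0 \<Longrightarrow> cmod (wQ z 1) = 2 * \<bar>Im z\<bar>"
proof -
  assume z: "Im z \<noteq> 0"
  have "rr z 1 = 2 * Re z" using z by (simp add: rr_def power2_eq_square)
  then have "wQ z 1 = Complex 0 (2 * Im z)" by (simp add: wQ_def complex_eq_iff)
  moreover have "sqrt ((2 * Im z)^2) = 2 * \<bar>Im z\<bar>" by (simp only: real_sqrt_abs)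
  ultimately show ?thesis by (simp add: cmod_def)
qed

lemma N_fin:
  assumes n: "2 \<le> n" and z: "Im z \<noteq> 0"
  shows "(\<integral>\<^sup>+t. ennreal (G n z t) \<partial>lebR n) < \<infinity>"
proof -
  define I where "I = {1..n-1}"
  define K where "K = (\<Sum>k\<in>I. cmod (wQ z k))"
  define C where "C = Pi\<^sub>E I (\<lambda>_. {-1..1::real})"
  have L: "lebR n = PiM I (\<lambda>_. lborel)" by (simp add: lebR_def I_def)
  have CS: "C \<in> sets (lebR n)" unfolding L C_def by (intro sets_PiM_I_finite) (auto simp: I_def)
  have K0: "0 \<le> K" unfolding K_def by (simp add: sum_nonneg)
  have pt: "ennreal (G n z t) \<le> ennreal (K^2) * indicator C t" if t: "t \<in> space (lebR n)" for t
  proof (cases "t \<in> Dz n z")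
    case False then show ?thesis by (simp add: G_def)
  next
    case True
    then have tb: "\<forall>k\<in>I. \<bar>t k\<bar> \<le> 1" using Dz_iff[OF z] by (simp add: I_def)
    have tC: "t \<in> C" using t tb unfolding L C_def by (auto simp: space_PiM PiE_def Pi_def)
    have "cmod (Qf n z t) \<le> (\<Sum>k\<in>I. cmod (complex_of_real (t k) * wQ z k))"
      unfolding Qf_def I_def by (rule norm_sum)
    also have "\<dots> \<le> (\<Sum>k\<in>I. cmod (wQ z k))"
    proof (rule sum_mono)
      fix k assume "k \<in> I"
      then have "\<bar>t k\<bar> \<le> 1" using tb by auto
      then show "cmod (complex_of_real (t k) * wQ z k) \<le> cmod (wQ z k)"
        by (simp add: norm_mult mult_left_le_one_le)
    qed
    finally have "cmod (Qf n z t) \<le> K" by (simp add: K_def)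
    then have "(cmod (Qf n z t))^2 \<le> K^2" by (simp add: power_mono)
    then show ?thesis using True tC by (simp add: G_def)
  qed
  have "(\<integral>\<^sup>+t. ennreal (G n z t) \<partial>lebR n) \<le> (\<integral>\<^sup>+t. ennreal (K^2) * indicator C t \<partial>lebR n)"
    by (rule nn_integral_mono) (rule pt)
  also have "\<dots> = ennreal (K^2) * emeasure (lebR n) C"
    by (rule nn_integral_cmult_indicator[OF CS])
  also have "emeasure (lebR n) C = (\<Prod>k\<in>I. emeasure lborel {-1..1::real})"
    unfolding L C_def by (rule lbp.emeasure_PiM) (auto simp: I_def)
  also have "\<dots> < \<infinity>" by (simp add: ennreal_prod_eq_top less_top[symmetric] I_def power_eq_top_ennreal)
  then have "ennreal (K^2) * (\<Prod>k\<in>I. emeasure lborel {-1..1::real}) < \<infinity>"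
    by (simp add: ennreal_mult_less_top)
  finally show ?thesis .
qed


lemma sum_abs_bound:
  fixes w t :: "nat \<Rightarrow> real"
  assumes "\<And>k. k \<in> I \<Longrightarrow> \<bar>t k\<bar> \<le> e"
  shows "\<bar>\<Sum>k\<in>I. t k * w k\<bar> \<le> e * (\<Sum>k\<in>I. \<bar>w k\<bar>)"
proof -
  have "\<bar>\<Sum>k\<in>I. t k * w k\<bar> \<le> (\<Sum>k\<in>I. \<bar>t k * w k\<bar>)" by (rule sum_abs)
  also have "\<dots> \<le> (\<Sum>k\<in>I. e * \<bar>w k\<bar>)"
    by (rule sum_mono) (simp add: abs_mult assms mult_right_mono)
  finally show ?thesis by (simp add: sum_distrib_left)
qed

lemma N_pos:
  assumes n: "2 \<le> n" and z: "Im z \<noteq> 0"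
  shows "0 < (\<integral>\<^sup>+t. ennreal (G n z t) \<partial>lebR n)"
proof -
  define I where "I = {1..n-1}"
  have I1: "1 \<in> I" "finite I" using n by (auto simp: I_def)
  define W where "W = 1 + (\<Sum>k\<in>I. \<bar>wA z k\<bar> + \<bar>wB z k\<bar> + cmod (wQ z k))"
  define a where "a = \<bar>Im z\<bar>"
  have a0: "0 < a" using z by (simp add: a_def)
  have W1: "1 \<le> W" unfolding W_def by (simp add: sum_nonneg)
  have WA: "(\<Sum>k\<in>I. \<bar>wA z k\<bar>) \<le> W"
  proof -
    have "(\<Sum>k\<in>I. \<bar>wA z k\<bar>) \<le> (\<Sum>k\<in>I. \<bar>wA z k\<bar> + \<bar>wB z k\<bar> + cmod (wQ z k))"
      by (rule sum_mono) simp
    then show ?thesis unfolding W_def by linarith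
  qed
  have WB: "(\<Sum>k\<in>I. \<bar>wB z k\<bar>) \<le> W"
  proof -
    have "(\<Sum>k\<in>I. \<bar>wB z k\<bar>) \<le> (\<Sum>k\<in>I. \<bar>wA z k\<bar> + \<bar>wB z k\<bar> + cmod (wQ z k))"
      by (rule sum_mono) simp
    then show ?thesis unfolding W_def by linarith
  qed
  have WQ: "(\<Sum>k\<in>I-{1}. cmod (wQ z k)) \<le> W"
  proof -
    have "(\<Sum>k\<in>I-{1}. cmod (wQ z k)) \<le> (\<Sum>k\<in>I. cmod (wQ z k))"
      using I1 by (intro sum_mono2) auto
    also have "\<dots> \<le> (\<Sum>k\<in>I. \<bar>wA z k\<bar> + \<bar>wB z k\<bar> + cmod (wQ z k))"
      by (rule sum_mono) simp
    also have "\<dots> \<le> W" unfolding W_def by linarith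
    finally show ?thesis .
  qed
  define e where "e = 1 / (2 * W)"
  define h where "h = e * a / (W + a)"
  have e0: "0 < e" using W1 by (simp add: e_def)
  have h0: "0 < h" using e0 a0 W1 by (simp add: h_def)
  have he: "h \<le> e" using e0 a0 W1 by (simp add: h_def field_simps)
  have hW: "h * W \<le> e * a" using e0 a0 W1 by (simp add: h_def field_simps)
  have eW: "2 * e * W = 1" using W1 by (simp add: e_def)
  define B where "B = Pi\<^sub>E I (\<lambda>k. if k = 1 then {e..2*e} else {-h..h})"
  have L: "lebR n = PiM I (\<lambda>_. lborel)" by (simp add: lebR_def I_def)
  have BS: "B \<in> sets (lebR n)" unfolding L B_def by (intro sets_PiM_I_finite) (auto simp: I1)
  define c0 where "c0 = (e * a)^2"
  have pt: "ennreal c0 * indicator B t \<le> ennreal (G n z t)" for t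
  proof (cases "t \<in> B")
    case False then show ?thesis by simp
  next
    case True
    have "t 1 \<in> {e..2*e}" using PiE_mem[OF True[unfolded B_def] I1(1)] by simp
    then have t1: "e \<le> t 1" "t 1 \<le> 2 * e" by auto
    have tk: "\<bar>t k\<bar> \<le> h" if "k \<in> I - {1}" for k
    proof -
      have "t k \<in> {-h..h}" using PiE_mem[OF True[unfolded B_def], of k] that by simp
      then show ?thesis by auto
    qed
    have tb: "\<bar>t k\<bar> \<le> 2 * e" if "k \<in> I" for k
      using tk[of k] t1 he e0 that by (cases "k = 1") auto
    have "\<bar>Af n z t\<bar> \<le> 2 * e * (\<Sum>k\<in>I. \<bar>wA z k\<bar>)"
      unfolding Af_def I_def[symmetric] by (rule sum_abs_bound) (rule tb)
    also have "\<dots> \<le> 2 * e * W" using WA e0 by simp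
    finally have A1: "\<bar>Af n z t\<bar> \<le> 1" using eW by simp
    have "\<bar>Bf n z t\<bar> \<le> 2 * e * (\<Sum>k\<in>I. \<bar>wB z k\<bar>)"
      unfolding Bf_def I_def[symmetric] by (rule sum_abs_bound) (rule tb)
    also have "\<dots> \<le> 2 * e * W" using WB e0 by simp
    finally have B1: "\<bar>Bf n z t\<bar> \<le> 1" using eW by simp
    have T1: "\<forall>k\<in>{1..n-1}. \<bar>t k\<bar> \<le> 1"
    proof
      fix k assume "k \<in> {1..n-1}"
      then have "\<bar>t k\<bar> \<le> 2 * e" using tb by (simp add: I_def)
      also have "2 * e \<le> 1" using W1 by (simp add: e_def)
      finally show "\<bar>t k\<bar> \<le> 1" .
    qed
    have inD: "t \<in> Dz n z" using Dz_iff[OF z] A1 B1 T1 by simp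
    have Qs: "Qf n z t = complex_of_real (t 1) * wQ z 1 + (\<Sum>k\<in>I-{1}. complex_of_real (t k) * wQ z k)"
      unfolding Qf_def I_def[symmetric] using I1 by (simp add: sum.remove)
    have R: "cmod (\<Sum>k\<in>I-{1}. complex_of_real (t k) * wQ z k) \<le> h * W"
    proof -
      have "cmod (\<Sum>k\<in>I-{1}. complex_of_real (t k) * wQ z k) \<le> (\<Sum>k\<in>I-{1}. cmod (complex_of_real (t k) * wQ z k))"
        by (rule norm_sum)
      also have "\<dots> \<le> (\<Sum>k\<in>I-{1}. h * cmod (wQ z k))"
        by (rule sum_mono) (simp add: norm_mult tk mult_right_mono)
      also have "\<dots> = h * (\<Sum>k\<in>I-{1}. cmod (wQ z k))" by (simp add: sum_distrib_left)
      also have "\<dots> \<le> h * W" using WQ h0 by simp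
      finally show ?thesis .
    qed
    have F: "cmod (complex_of_real (t 1) * wQ z 1) = t 1 * (2 * a)"
      using t1 e0 wQ1[OF z] by (simp add: norm_mult a_def)
    have "e * a \<le> t 1 * a" using t1 a0 by (intro mult_right_mono) auto
    then have "e * a \<le> t 1 * (2 * a) - h * W" using hW by linarith
    also have "\<dots> \<le> cmod (Qf n z t)"
      unfolding Qs using F R norm_diff_ineq[of "complex_of_real (t 1) * wQ z 1" "(\<Sum>k\<in>I-{1}. complex_of_real (t k) * wQ z k)"]
      by linarith
    finally have "e * a \<le> cmod (Qf n z t)" .
    then have "c0 \<le> (cmod (Qf n z t))^2" unfolding c0_def using e0 a0 by (simp add: power_mono)
    then show ?thesis using True inD by (simp add: G_def)
  qed
  have "ennreal c0 * emeasure (lebR n) B = (\<integral>\<^sup>+t. ennreal c0 * indicator B t \<partial>lebR n)"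
    by (rule nn_integral_cmult_indicator[OF BS, symmetric])
  also have "\<dots> \<le> (\<integral>\<^sup>+t. ennreal (G n z t) \<partial>lebR n)"
    by (rule nn_integral_mono) (rule pt)
  finally have le: "ennreal c0 * emeasure (lebR n) B \<le> (\<integral>\<^sup>+t. ennreal (G n z t) \<partial>lebR n)" .
  have "emeasure (lebR n) B = (\<Prod>k\<in>I. emeasure lborel (if k = 1 then {e..2*e} else {-h..h}))"
    unfolding L B_def by (rule lbp.emeasure_PiM) (auto simp: I1)
  also have "\<dots> = (\<Prod>k\<in>I. ennreal (if k = 1 then e else 2 * h))"
    using e0 h0 by (intro prod.cong refl) auto
  also have "\<dots> = ennreal (\<Prod>k\<in>I. if k = 1 then e else 2 * h)"
    using e0 h0 by (intro prod_ennreal) auto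
  finally have mB: "emeasure (lebR n) B = ennreal (\<Prod>k\<in>I. if k = 1 then e else 2 * h)" .
  have P0: "0 < (\<Prod>k\<in>I. if k = 1 then e else 2 * h)" by (rule prod_pos) (use e0 h0 in simp)
  have "0 < c0" using e0 a0 by (simp add: c0_def)
  then have "0 < ennreal (c0 * (\<Prod>k\<in>I. if k = 1 then e else 2 * h))" using P0 by simp
  moreover have "ennreal (c0 * (\<Prod>k\<in>I. if k = 1 then e else 2 * h)) = ennreal c0 * emeasure (lebR n) B"
    unfolding mB using \<open>0 < c0\<close> P0 by (intro ennreal_mult) auto
  ultimately have "0 < ennreal c0 * emeasure (lebR n) B" by metis
  then show ?thesis using le by (rule less_le_trans)
qed


lemma Im_inv: "Im (1/z) = - Im z / cmod z ^ 2"
  by (simp add: Im_divide')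

theorem proposition1:
  fixes n :: nat
  assumes "n \<ge> 2"
  shows "\<forall>z::complex. Im z \<noteq> 0 \<longrightarrow>
           psi n z > 0 \<and> psi n (- z) = psi n z \<and> psi n (cnj z) = psi n z
           \<and> psi n (1 / z) = (cmod z) ^ 4 * psi n z"
proof (intro allI impI)
  fix z :: complex assume z: "Im z \<noteq> 0"
  have n: "2 \<le> n" using assms .
  define N where "N w = (\<integral>\<^sup>+t. ennreal (G n w t) \<partial>lebR n)" for w
  have z0: "z \<noteq> 0" using z by auto
  have cz: "0 < cmod z" using z0 by simp
  note Gm[measurable] = G_meas[OF z]
  have pos: "psi n z > 0"
  proof -
    have "0 < enn2real (N z)"
      using N_pos[OF n z] N_fin[OF n z] by (simp add: N_def enn2real_positive_iff)
    then show ?thesis using z by (simp add: psi_eq[OF z] N_def[symmetric])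
  qed
  have cnj_eq: "psi n (cnj z) = psi n z"
  proof -
    have "G n (cnj z) = G n z"
      by (rule ext) (simp add: G_def Dz_cnj[OF z] Qf_cnj)
    moreover have "Im (cnj z) \<noteq> 0" using z by simp
    ultimately show ?thesis using psi_eq[OF z] psi_eq[of "cnj z"] by simp
  qed
  have neg_eq: "psi n (-z) = psi n z"
  proof -
    have z': "Im (-z) \<noteq> 0" using z by simp
    note Gm'[measurable] = G_meas[OF z']
    have Gme: "(\<lambda>t. ennreal (G n (-z) t)) \<in> borel_measurable (lebR n)" by measurable
    have "N (-z) = (\<integral>\<^sup>+t. ennreal (G n (-z) (\<lambda>k\<in>{1..n-1}. (-1) ^ k * t (id k))) \<partial>lebR n)"
      unfolding N_def lebR_def
    proof (rule pim_perm[symmetric])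
      show "(-1::real) ^ k = 1 \<or> (-1::real) ^ k = -1" for k by (metis neg_one_even_power neg_one_odd_power)
    qed (use Gme in \<open>auto simp: lebR_def bij_betw_def\<close>)
    also have "\<dots> = N z"
    proof -
      have "G n (-z) (\<lambda>k\<in>{1..n-1}. (-1) ^ k * t (id k)) = G n z t" for t
      proof -
        have "(\<lambda>k\<in>{1..n-1}. (-1) ^ k * t (id k)) = Nmap n t" by (simp add: Nmap_def)
        then show ?thesis by (simp add: G_def Dz_neg[OF z] Qf_neg indicator_def)
      qed
      then show ?thesis by (simp add: N_def)
    qed
    finally have "N (-z) = N z" .
    then show ?thesis using psi_eq[OF z] psi_eq[OF z'] by (simp add: N_def)
  qed
  have inv_eq: "psi n (1/z) = (cmod z) ^ 4 * psi n z"
  proof -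
    have z': "Im (1/z) \<noteq> 0" using Im_inv_nz[OF z] .
    note Gm'[measurable] = G_meas[OF z']
    define \<kappa> where "\<kappa> = (cmod z / cmod z ^ (n-1))^2"
    have \<kappa>0: "0 \<le> \<kappa>" by (simp add: \<kappa>_def)
    have pt: "G n (1/z) (Lmap n z t) = G n z t * \<kappa>" for t
    proof -
      have "cmod z ^ (n-1) * cmod (Qf n (1/z) (Lmap n z t)) = cmod z * cmod (Qf n z t)"
        using arg_cong[OF Q_inv[OF n z, of t], of cmod] by (simp add: norm_mult norm_power)
      then have "cmod (Qf n (1/z) (Lmap n z t)) = cmod (Qf n z t) * (cmod z / cmod z ^ (n-1))"
        using cz by (simp add: field_simps)
      then show ?thesis
        by (simp add: G_def Dz_inv[OF n z] \<kappa>_def indicator_def power_mult_distrib power_divide)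
    qed
    have "ennreal \<kappa> * N z = ennreal (1 / cmod z ^ (2*(n-1))) * N (1/z)"
    proof -
      have "ennreal \<kappa> * N z = (\<integral>\<^sup>+t. ennreal \<kappa> * ennreal (G n z t) \<partial>lebR n)"
        unfolding N_def by (rule nn_integral_cmult[symmetric]) measurable
      also have "\<dots> = (\<integral>\<^sup>+t. ennreal (G n (1/z) (Lmap n z t)) \<partial>lebR n)"
        unfolding pt using \<kappa>0 by (intro nn_integral_cong) (simp add: G_nonneg ennreal_mult mult.commute)
      also have "\<dots> = ennreal (1 / cmod z ^ (2*(n-1))) * N (1/z)"
        unfolding N_def by (rule Lmap_int[OF n z]) measurable
      finally show ?thesis .
    qed
    then have "ennreal (cmod z ^ (2*(n-1))) * (ennreal \<kappa> * N z) = ennreal (cmod z ^ (2*(n-1))) * ennreal (1 / cmod z ^ (2*(n-1))) * N (1/z)"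
      by (simp add: mult.assoc)
    moreover have "ennreal (cmod z ^ (2*(n-1))) * ennreal (1 / cmod z ^ (2*(n-1))) = 1"
      using cz by (simp flip: ennreal_mult)
    moreover have "ennreal (cmod z ^ (2*(n-1))) * ennreal \<kappa> = ennreal (cmod z ^ 2)"
    proof -
      have "cmod z ^ (2*(n-1)) * \<kappa> = cmod z ^ 2"
      proof -
        have "cmod z ^ (2*(n-1)) = (cmod z ^ (n-1))^2" by (metis power_mult mult.commute)
        then show ?thesis using cz by (simp add: \<kappa>_def power_divide)
      qed
      then show ?thesis using \<kappa>0 by (simp flip: ennreal_mult)
    qed
    ultimately have NI: "N (1/z) = ennreal (cmod z ^ 2) * N z"
      by (simp add: mult.assoc[symmetric])
    have "psi n (1/z) = (1 / \<bar>Im (1/z)\<bar>) * enn2real (N (1/z))"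
      using psi_eq[OF z'] by (simp add: N_def)
    also have "\<dots> = (cmod z ^ 2 / \<bar>Im z\<bar>) * (cmod z ^ 2 * enn2real (N z))"
      unfolding NI Im_inv using cz by (simp add: enn2real_mult abs_div)
    also have "\<dots> = (cmod z) ^ 4 * psi n z"
      using psi_eq[OF z] by (simp add: N_def)
    finally show ?thesis .
  qed
  show "psi n z > 0 \<and> psi n (- z) = psi n z \<and> psi n (cnj z) = psi n z
           \<and> psi n (1 / z) = (cmod z) ^ 4 * psi n z"
    using pos neg_eq cnj_eq inv_eq by blast
qed


end
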